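(* Let $\Omega$ be a region of $\mathbb{C}$ and let $F:\Omega\to\mathbb{M}_n$ be analytic. Suppose there is $z_0\in\Omega$ such that $\|F(z)\|\leq\|F(z_0)\|$ for all $z\in\Omega$, and set \[d=\dim\{x\in\mathbb{C}^n:\ \|F(z_0)x\|=\|F(z_0)\|\cdot\|x\|\}.\] Then there are $n\times n$ unitary matrices $U$ and $V$ such that $F(z)=\|F(z_0)\|\,UV$ for all $z\in\Omega$ when $d=n$, or, when $d<n$, there is in addition an analytic function $R:\Omega\to\mathbb{M}_{n-d}$ such that \[F(z)=U\begin{bmatrix}\|F(z_0)\|\cdot I_d & 0\\ 0 & R(z)\end{bmatrix}V\quad\text{for all }z\in\Omega.\] In particular, whenever $x\in\mathbb{C}^n$ satisfies $\|F(z_0)x\|=\|F(z_0)\|\cdot\|x\|$, the map $z\mapsto F(z)x$ is constant on $\Omega$ and $F^{(k)}(z_0)x=0$ for all $k\geq1$.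
   Context: A region is a nonempty open connected subset of $\mathbb{C}$. $\mathbb{M}_n$ is the set of $n\times n$ complex matrices; $F$ is analytic if each entry is analytic, and $F^{(k)}$ denotes its $k$th derivative. $\|x\|$ is the Euclidean norm on $\mathbb{C}^n$ and $\|T\|$ the induced operator norm. $I_d$ is the $d\times d$ identity matrix. A matrix $A$ is unitary if $A^*A=AA^*=I$. *)

theory Defs
  imports "Jordan_Normal_Form.Schur_Decomposition" "HOL-Analysis.Analysis"
begin

definition vnorm :: "complex Matrix.vec \<Rightarrow> real" where
  "vnorm x = sqrt (\<Sum>i<dim_vec x. (cmod (vec_index x i))^2)"

definition opnorm :: "complex mat \<Rightarrow> real" where
  "opnorm A = Sup {vnorm (mult_mat_vec A x) | x. x \<in> carrier_vec (dim_col A) \<and> vnorm x \<le> 1}"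

definition unitary_mat :: "nat \<Rightarrow> complex mat \<Rightarrow> bool" where
  "unitary_mat n A \<longleftrightarrow> A \<in> carrier_mat n n \<and> mat_adjoint A * A = 1\<^sub>m n \<and> A * mat_adjoint A = 1\<^sub>m n"

definition cdim :: "nat \<Rightarrow> complex Matrix.vec set \<Rightarrow> nat" where
  "cdim n W = vectorspace.dim class_ring
     ((module_vec TYPE(complex) n)\<lparr>carrier := LinearCombinations.module.span class_ring (module_vec TYPE(complex) n) W\<rparr>)"

definition mat_analytic_on :: "nat \<Rightarrow> (complex \<Rightarrow> complex mat) \<Rightarrow> complex set \<Rightarrow> bool" where
  "mat_analytic_on m F S \<longleftrightarrow> (\<forall>z\<in>S. F z \<in> carrier_mat m m) \<and>
     (\<forall>i<m. \<forall>j<m. (\<lambda>z. F z $$ (i,j)) analytic_on S)"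

definition mat_deriv :: "nat \<Rightarrow> nat \<Rightarrow> (complex \<Rightarrow> complex mat) \<Rightarrow> complex \<Rightarrow> complex mat" where
  "mat_deriv m k F z = Matrix.mat m m (\<lambda>(i,j). (deriv ^^ k) (\<lambda>w. F w $$ (i,j)) z)"

end

theory Submission
  imports Defs "Jordan_Normal_Form.DL_Rank" "HOL-Complex_Analysis.Complex_Analysis"
begin

no_notation Finite_Cartesian_Product.vec_nth (infixl \<open>$\<close> 90)
no_notation fps_nth (infixl \<open>$\<close> 75)

definition ip :: "complex Matrix.vec \<Rightarrow> complex Matrix.vec \<Rightarrow> complex" where
  "ip x y = (\<Sum>i<dim_vec x. x $ i * cnj (y $ i))"

lemma ip_scalar: "x \<in> carrier_vec n \<Longrightarrow> y \<in> carrier_vec n \<Longrightarrow> x \<bullet>c y = ip x y"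
  unfolding ip_def scalar_prod_def by (auto simp: atLeast0LessThan intro!: sum.cong)

lemma vnorm_ip: "complex_of_real (vnorm x ^ 2) = ip x x"
proof -
  have "vnorm x ^ 2 = (\<Sum>i<dim_vec x. (cmod (x $ i))^2)"
    unfolding vnorm_def by (simp add: sum_nonneg)
  then have "complex_of_real (vnorm x ^ 2) = (\<Sum>i<dim_vec x. complex_of_real ((cmod (x $ i))^2))"
    by simp
  also have "\<dots> = ip x x" unfolding ip_def by (simp only: complex_norm_square)
  finally show ?thesis .
qed

lemma vnorm_sq: "vnorm x ^ 2 = Re (ip x x)"
  using vnorm_ip[of x] by (metis Re_complex_of_real)

lemma vnorm_nonneg: "vnorm x \<ge> 0"
  unfolding vnorm_def by (simp add: sum_nonneg)

lemma vnorm_L2: "vnorm x = L2_set (\<lambda>i. cmod (x $ i)) {..<dim_vec x}"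
  unfolding vnorm_def L2_set_def by simp

lemma vnorm_zero_iff: "x \<in> carrier_vec n \<Longrightarrow> vnorm x = 0 \<longleftrightarrow> x = 0\<^sub>v n"
proof
  assume x: "x \<in> carrier_vec n" and v: "vnorm x = 0"
  have "(\<Sum>i<n. (cmod (x $ i))^2) = 0" using v x unfolding vnorm_def by simp
  then have "\<forall>i\<in>{..<n}. (cmod (x $ i))^2 = 0"
    by (subst sum_nonneg_eq_0_iff[symmetric]) auto
  then show "x = 0\<^sub>v n" using x by (intro eq_vecI) auto
next
  assume "x \<in> carrier_vec n" "x = 0\<^sub>v n"
  then show "vnorm x = 0" unfolding vnorm_def by simp
qed

lemma ip_add_left: "x \<in> carrier_vec n \<Longrightarrow> y \<in> carrier_vec n \<Longrightarrow> z \<in> carrier_vec n \<Longrightarrow>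
  ip (x + y) z = ip x z + ip y z"
  unfolding ip_def by (auto simp: sum.distrib distrib_right)

lemma ip_add_right: "x \<in> carrier_vec n \<Longrightarrow> y \<in> carrier_vec n \<Longrightarrow> z \<in> carrier_vec n \<Longrightarrow>
  ip x (y + z) = ip x y + ip x z"
  unfolding ip_def by (auto simp: sum.distrib distrib_left)

lemma ip_minus_left: "x \<in> carrier_vec n \<Longrightarrow> y \<in> carrier_vec n \<Longrightarrow> z \<in> carrier_vec n \<Longrightarrow>
  ip (x - y) z = ip x z - ip y z"
  unfolding ip_def by (auto simp: sum_subtractf left_diff_distrib)

lemma ip_minus_right: "x \<in> carrier_vec n \<Longrightarrow> y \<in> carrier_vec n \<Longrightarrow> z \<in> carrier_vec n \<Longrightarrow>
  ip x (y - z) = ip x y - ip x z"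
  unfolding ip_def by (auto simp: sum_subtractf right_diff_distrib)

lemma ip_smult_left: "ip (a \<cdot>\<^sub>v x) y = a * ip x y"
  unfolding ip_def by (auto simp: sum_distrib_left ac_simps)

lemma ip_smult_right: "dim_vec y = dim_vec x \<Longrightarrow> ip x (a \<cdot>\<^sub>v y) = cnj a * ip x y"
  unfolding ip_def by (auto simp: sum_distrib_left ac_simps)

lemma ip_cnj: "dim_vec y = dim_vec x \<Longrightarrow> cnj (ip x y) = ip y x"
  unfolding ip_def by (auto simp: ac_simps)

lemma ip_zero_left: "ip (0\<^sub>v n) y = 0"
  unfolding ip_def by simp

lemma ip_self_zero: "x \<in> carrier_vec n \<Longrightarrow> ip x x = 0 \<longleftrightarrow> x = 0\<^sub>v n"
  using vnorm_ip[of x] vnorm_zero_iff[of x n] by (metis of_real_eq_0_iff power_eq_0_iff zero_less_numeral)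

lemma ip_CS: "dim_vec y = dim_vec x \<Longrightarrow> cmod (ip x y) \<le> vnorm x * vnorm y"
proof -
  assume d: "dim_vec y = dim_vec x"
  have "cmod (ip x y) \<le> (\<Sum>i<dim_vec x. cmod (x $ i * cnj (y $ i)))"
    unfolding ip_def by (rule norm_sum)
  also have "\<dots> = (\<Sum>i<dim_vec x. \<bar>cmod (x $ i)\<bar> * \<bar>cmod (y $ i)\<bar>)"
    by (simp add: norm_mult)
  also have "\<dots> \<le> L2_set (\<lambda>i. cmod (x $ i)) {..<dim_vec x} * L2_set (\<lambda>i. cmod (y $ i)) {..<dim_vec x}"
    by (rule L2_set_mult_ineq)
  also have "\<dots> = vnorm x * vnorm y" using d by (simp add: vnorm_L2)
  finally show ?thesis .
qed

lemma vnorm_smult: "vnorm (a \<cdot>\<^sub>v x) = cmod a * vnorm x"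
proof -
  have "vnorm (a \<cdot>\<^sub>v x) ^ 2 = (cmod a * vnorm x) ^ 2"
    unfolding vnorm_sq power_mult_distrib
    by (simp add: ip_smult_left ip_smult_right flip: vnorm_sq) (use cmod_power2[of a] in \<open>simp add: power2_eq_square algebra_simps\<close>)
  then show ?thesis using vnorm_nonneg[of x] vnorm_nonneg[of "a \<cdot>\<^sub>v x"]
    by (simp add: power2_eq_iff_nonneg)
qed

lemma mat_vec_index: "A \<in> carrier_mat n n \<Longrightarrow> x \<in> carrier_vec n \<Longrightarrow> i < n \<Longrightarrow>
  (A *\<^sub>v x) $ i = (\<Sum>j<n. A $$ (i,j) * x $ j)"
  by (auto simp: scalar_prod_def atLeast0LessThan intro!: sum.cong)

lemma adj_carrier: "A \<in> carrier_mat n n \<Longrightarrow> mat_adjoint A \<in> carrier_mat n n"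
  unfolding mat_adjoint_def by (auto simp: mat_of_rows_def)

lemma adj_index: "A \<in> carrier_mat n n \<Longrightarrow> i < n \<Longrightarrow> j < n \<Longrightarrow> mat_adjoint A $$ (i,j) = cnj (A $$ (j,i))"
  unfolding mat_adjoint_def by (auto simp: mat_of_rows_def)

lemma ip_adj: assumes A: "A \<in> carrier_mat n n" and x: "x \<in> carrier_vec n" and y: "y \<in> carrier_vec n"
  shows "ip (A *\<^sub>v x) y = ip x (mat_adjoint A *\<^sub>v y)"
proof -
  have "ip (A *\<^sub>v x) y = (\<Sum>i<n. (\<Sum>j<n. A $$ (i,j) * x $ j) * cnj (y $ i))"
    unfolding ip_def using A x by (auto simp: mat_vec_index[OF A x] simp del: index_mult_mat_vec)
  also have "\<dots> = (\<Sum>i<n. \<Sum>j<n. A $$ (i,j) * x $ j * cnj (y $ i))"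
    by (simp add: sum_distrib_right)
  also have "\<dots> = (\<Sum>j<n. \<Sum>i<n. A $$ (i,j) * x $ j * cnj (y $ i))"
    by (rule sum.swap)
  also have "\<dots> = (\<Sum>j<n. x $ j * cnj (\<Sum>i<n. mat_adjoint A $$ (j,i) * y $ i))"
    using A by (auto simp: sum_distrib_left adj_index intro!: sum.cong)
  also have "\<dots> = ip x (mat_adjoint A *\<^sub>v y)"
    unfolding ip_def using A x y adj_carrier[OF A] by (auto simp: mat_vec_index[OF adj_carrier[OF A] y] simp del: index_mult_mat_vec)
  finally show ?thesis .
qed


lemma vnorm_index_le: "i < dim_vec x \<Longrightarrow> cmod (x $ i) \<le> vnorm x"
  unfolding vnorm_L2 by (rule member_le_L2_set) auto

lemma vnorm_le_sum: "vnorm x \<le> (\<Sum>i<dim_vec x. cmod (x $ i))"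
  unfolding vnorm_L2 by (rule L2_set_le_sum) auto

lemma vnorm_zero[simp]: "vnorm (0\<^sub>v n) = 0"
  unfolding vnorm_def by simp

lemma mat_vec_zero[simp]: "A \<in> carrier_mat n n \<Longrightarrow> A *\<^sub>v 0\<^sub>v n = 0\<^sub>v n"
  by (intro eq_vecI) auto

lemma opnorm_bdd: assumes A: "A \<in> carrier_mat n n"
  shows "bdd_above {vnorm (A *\<^sub>v x) | x. x \<in> carrier_vec (dim_col A) \<and> vnorm x \<le> 1}"
proof (rule bdd_aboveI)
  fix r assume "r \<in> {vnorm (A *\<^sub>v x) | x. x \<in> carrier_vec (dim_col A) \<and> vnorm x \<le> 1}"
  then obtain x where x: "x \<in> carrier_vec n" "vnorm x \<le> 1" and r: "r = vnorm (A *\<^sub>v x)"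
    using A by auto
  have "r \<le> (\<Sum>i<n. cmod ((A *\<^sub>v x) $ i))" unfolding r using vnorm_le_sum[of "A *\<^sub>v x"] A by simp
  also have "\<dots> \<le> (\<Sum>i<n. \<Sum>j<n. cmod (A $$ (i,j)))"
  proof (rule sum_mono)
    fix i assume i: "i \<in> {..<n}"
    have "cmod ((A *\<^sub>v x) $ i) = cmod (\<Sum>j<n. A $$ (i,j) * x $ j)"
      using mat_vec_index[OF A x(1)] i by simp
    also have "\<dots> \<le> (\<Sum>j<n. cmod (A $$ (i,j) * x $ j))" by (rule norm_sum)
    also have "\<dots> \<le> (\<Sum>j<n. cmod (A $$ (i,j)))"
    proof (rule sum_mono)
      fix j assume j: "j \<in> {..<n}"
      have "cmod (x $ j) \<le> 1" using vnorm_index_le[of j x] x j by auto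
      then show "cmod (A $$ (i,j) * x $ j) \<le> cmod (A $$ (i,j))"
        by (simp add: norm_mult mult_left_le)
    qed
    finally show "cmod ((A *\<^sub>v x) $ i) \<le> (\<Sum>j<n. cmod (A $$ (i,j)))" .
  qed
  finally show "r \<le> (\<Sum>i<n. \<Sum>j<n. cmod (A $$ (i,j)))" .
qed

lemma opnorm_nonneg: assumes A: "A \<in> carrier_mat n n" shows "opnorm A \<ge> 0"
proof -
  have "vnorm (A *\<^sub>v 0\<^sub>v n) \<in> {vnorm (A *\<^sub>v x) | x. x \<in> carrier_vec (dim_col A) \<and> vnorm x \<le> 1}"
  proof -
    have "0\<^sub>v n \<in> carrier_vec (dim_col A) \<and> vnorm (0\<^sub>v n) \<le> 1" using A by simp
    then show ?thesis by blast
  qed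
  moreover have "vnorm (A *\<^sub>v 0\<^sub>v n) = 0" using A by simp
  ultimately show ?thesis unfolding opnorm_def using opnorm_bdd[OF A]
    by (metis (no_types, lifting) cSup_upper)
qed

lemma opnorm_bound: assumes A: "A \<in> carrier_mat n n" and x: "x \<in> carrier_vec n"
  shows "vnorm (A *\<^sub>v x) \<le> opnorm A * vnorm x"
proof (cases "x = 0\<^sub>v n")
  case True
  then show ?thesis using A opnorm_nonneg[OF A] by simp
next
  case False
  then have vx: "vnorm x > 0" using vnorm_zero_iff[OF x] vnorm_nonneg[of x] by auto
  define u where "u = complex_of_real (1 / vnorm x) \<cdot>\<^sub>v x"
  have u: "u \<in> carrier_vec n" unfolding u_def using x by simp
  have vu: "vnorm u = 1" unfolding u_def vnorm_smult using vx by (simp add: norm_divide)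
  have Au: "A *\<^sub>v u = complex_of_real (1 / vnorm x) \<cdot>\<^sub>v (A *\<^sub>v x)"
    unfolding u_def by (rule mult_mat_vec[OF A x])
  have "vnorm (A *\<^sub>v u) \<in> {vnorm (A *\<^sub>v x) | x. x \<in> carrier_vec (dim_col A) \<and> vnorm x \<le> 1}"
    using A u vu by auto
  then have "vnorm (A *\<^sub>v u) \<le> opnorm A" unfolding opnorm_def using opnorm_bdd[OF A]
    by (metis (no_types, lifting) cSup_upper)
  then have "vnorm (A *\<^sub>v x) / vnorm x \<le> opnorm A"
    unfolding Au vnorm_smult using vx by (simp add: norm_divide)
  then show ?thesis using vx by (simp add: divide_le_eq)
qed


lemma ip_expand: assumes u: "u \<in> carrier_vec n" and v: "v \<in> carrier_vec n"
  shows "Re (ip (u + complex_of_real s \<cdot>\<^sub>v v) (u + complex_of_real s \<cdot>\<^sub>v v))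
     = Re (ip u u) + 2 * s * Re (ip u v) + s^2 * Re (ip v v)"
proof -
  have sv: "complex_of_real s \<cdot>\<^sub>v v \<in> carrier_vec n" using v by simp
  have "ip (u + complex_of_real s \<cdot>\<^sub>v v) (u + complex_of_real s \<cdot>\<^sub>v v)
     = ip u u + complex_of_real s * ip u v + complex_of_real s * ip v u + complex_of_real s * complex_of_real s * ip v v"
    using u v sv
    by (simp add: ip_add_left[of _ n] ip_add_right[of _ n] ip_smult_left ip_smult_right algebra_simps)
  moreover have "ip v u = cnj (ip u v)" using u v ip_cnj[of v u] by simp
  ultimately show ?thesis by (simp add: power2_eq_square)
qed

lemma max_vec_eig:
  assumes T: "T \<in> carrier_mat n n" and c: "c \<ge> 0"
    and bound: "\<And>y. y \<in> carrier_vec n \<Longrightarrow> vnorm (T *\<^sub>v y) \<le> c * vnorm y"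
    and x: "x \<in> carrier_vec n" and eq: "vnorm (T *\<^sub>v x) = c * vnorm x"
  shows "mat_adjoint T *\<^sub>v (T *\<^sub>v x) = complex_of_real (c^2) \<cdot>\<^sub>v x"
proof -
  define g where "g = mat_adjoint T *\<^sub>v (T *\<^sub>v x) - complex_of_real (c^2) \<cdot>\<^sub>v x"
  have TH: "mat_adjoint T \<in> carrier_mat n n" using adj_carrier[OF T] .
  have g: "g \<in> carrier_vec n" unfolding g_def using T TH x by simp
  have Tx: "T *\<^sub>v x \<in> carrier_vec n" using T x by simp
  have Tg: "T *\<^sub>v g \<in> carrier_vec n" using T g by simp
  have key: "Re (ip (T *\<^sub>v x) (T *\<^sub>v g)) - c^2 * Re (ip x g) = Re (ip g g)"
  proof -
    have "ip (T *\<^sub>v x) (T *\<^sub>v g) = cnj (ip (T *\<^sub>v g) (T *\<^sub>v x))"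
      using ip_cnj[of "T *\<^sub>v x" "T *\<^sub>v g"] T x g by simp
    also have "ip (T *\<^sub>v g) (T *\<^sub>v x) = ip g (mat_adjoint T *\<^sub>v (T *\<^sub>v x))"
      by (rule ip_adj[OF T g Tx])
    also have "cnj \<dots> = ip (mat_adjoint T *\<^sub>v (T *\<^sub>v x)) g"
      using ip_cnj[of "mat_adjoint T *\<^sub>v (T *\<^sub>v x)" g] TH Tx g by simp
    finally have "ip (T *\<^sub>v x) (T *\<^sub>v g) = ip (mat_adjoint T *\<^sub>v (T *\<^sub>v x)) g" .
    moreover have "ip g g = ip (mat_adjoint T *\<^sub>v (T *\<^sub>v x)) g - complex_of_real (c^2) * ip x g"
      unfolding g_def using TH Tx x g by (simp add: ip_minus_left[of _ n] ip_smult_left)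
    ultimately show ?thesis by simp
  qed
  define N where "N = Re (ip g g)"
  have N0: "N \<ge> 0" unfolding N_def using vnorm_sq[of g] by (metis zero_le_power2)
  define s where "s = 1 / (c^2 + 1)"
  have "c^2 + 1 > 0" by (smt (verit) zero_le_power2)
  then have s0: "s > 0" unfolding s_def by simp
  define y where "y = x + complex_of_real s \<cdot>\<^sub>v g"
  have y: "y \<in> carrier_vec n" unfolding y_def using x g by simp
  have Ty: "T *\<^sub>v y = T *\<^sub>v x + complex_of_real s \<cdot>\<^sub>v (T *\<^sub>v g)"
    unfolding y_def using T x g by (simp add: mult_add_distrib_mat_vec[OF T] mult_mat_vec[OF T])
  have "vnorm (T *\<^sub>v y) ^ 2 \<le> (c * vnorm y) ^ 2"
    using bound[OF y] vnorm_nonneg by (simp add: power_mono)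
  then have ineq: "Re (ip (T *\<^sub>v y) (T *\<^sub>v y)) \<le> c^2 * Re (ip y y)"
    by (simp add: vnorm_sq power_mult_distrib)
  have e1: "Re (ip (T *\<^sub>v y) (T *\<^sub>v y)) = Re (ip (T *\<^sub>v x) (T *\<^sub>v x)) + 2 * s * Re (ip (T *\<^sub>v x) (T *\<^sub>v g)) + s^2 * Re (ip (T *\<^sub>v g) (T *\<^sub>v g))"
    unfolding Ty by (rule ip_expand[OF Tx Tg])
  have e2: "Re (ip y y) = Re (ip x x) + 2 * s * Re (ip x g) + s^2 * Re (ip g g)"
    unfolding y_def by (rule ip_expand[OF x g])
  have e3: "Re (ip (T *\<^sub>v x) (T *\<^sub>v x)) = c^2 * Re (ip x x)"
    using eq by (simp add: vnorm_sq[symmetric] power_mult_distrib)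
  have e4: "Re (ip (T *\<^sub>v g) (T *\<^sub>v g)) \<ge> 0" using vnorm_sq[of "T *\<^sub>v g"] by (metis zero_le_power2)
  from ineq e1 e2 e3 key have "2 * s * N + s^2 * Re (ip (T *\<^sub>v g) (T *\<^sub>v g)) \<le> s^2 * c^2 * N"
    unfolding N_def by (simp add: algebra_simps)
  then have "2 * s * N \<le> s^2 * c^2 * N" using e4 s0
    by (smt (verit) mult_nonneg_nonneg zero_le_power2)
  then have "2 * N \<le> s * c^2 * N" using s0 by (simp add: power2_eq_square mult.assoc)
  moreover have "s * c^2 \<le> 1" unfolding s_def using \<open>c^2 + 1 > 0\<close> by (simp add: divide_le_eq)
  ultimately have "N \<le> 0" using N0 mult_right_mono[of "s * c^2" 1 N]
    by linarith
  then have "ip g g = 0" using N0 vnorm_ip[of g] unfolding N_def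
    by (metis Re_complex_of_real antisym of_real_0 vnorm_sq)
  then have "g = 0\<^sub>v n" using ip_self_zero[OF g] by simp
  then have g0: "g = 0\<^sub>v n" .
  show ?thesis
  proof (rule eq_vecI)
    fix i assume "i < dim_vec (complex_of_real (c^2) \<cdot>\<^sub>v x)"
    then have i: "i < n" using x by simp
    have "g $ i = 0" using g0 i by simp
    then show "(mat_adjoint T *\<^sub>v (T *\<^sub>v x)) $ i = (complex_of_real (c^2) \<cdot>\<^sub>v x) $ i"
      unfolding g_def using i TH Tx x by simp
  qed (use TH x in simp)
qed


section \<open>Orthonormal lists\<close>

definition onl :: "nat \<Rightarrow> complex Matrix.vec list \<Rightarrow> bool" where
  "onl n vs \<longleftrightarrow> set vs \<subseteq> carrier_vec n \<and>
     (\<forall>i<length vs. \<forall>j<length vs. ip (vs!i) (vs!j) = (if i = j then 1 else 0))"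

abbreviation cspan :: "nat \<Rightarrow> complex Matrix.vec set \<Rightarrow> complex Matrix.vec set" where
  "cspan n S \<equiv> LinearCombinations.module.span class_ring (module_vec TYPE(complex) n) S"

abbreviation clindep :: "nat \<Rightarrow> complex Matrix.vec set \<Rightarrow> bool" where
  "clindep n S \<equiv> module.lin_dep class_ring (module_vec TYPE(complex) n) S"

lemma onl_distinct: assumes "onl n vs" shows "distinct vs"
proof -
  { fix i j assume i: "i < length vs" and j: "j < length vs" and ij: "i \<noteq> j" and eq: "vs!i = vs!j"
    have "ip (vs!i) (vs!j) = 0" using assms i j ij unfolding onl_def by auto
    moreover have "ip (vs!i) (vs!i) = 1" using assms i unfolding onl_def by auto
    ultimately have False using eq by simp }
  then show ?thesis by (auto simp: distinct_conv_nth)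
qed

lemma onl_corthogonal: assumes "onl n vs" shows "corthogonal vs"
proof (intro corthogonalI)
  fix i j assume i: "i < length vs" and j: "j < length vs"
  have c: "vs!i \<in> carrier_vec n" "vs!j \<in> carrier_vec n" using assms i j unfolding onl_def by auto
  show "(vs ! i \<bullet>c vs ! j = 0) = (i \<noteq> j)"
    using assms i j unfolding onl_def ip_scalar[OF c] by auto
qed

lemma onl_indep: assumes on: "onl n vs" shows "\<not> clindep n (set vs)"
proof -
  interpret vec_space "TYPE(complex)" n .
  have C: "set vs \<subseteq> carrier_vec n" using on unfolding onl_def by auto
  have dist: "distinct vs" using onl_distinct[OF on] .
  show ?thesis
  proof (rule finite_lin_indpt2)
    fix a assume lc: "lincomb a (set vs) = 0\<^sub>v n"
    show "\<forall>v\<in>set vs. a v = 0"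
    proof
      fix v assume v: "v \<in> set vs"
      then obtain j where j: "j < length vs" and vj: "v = vs!j" by (auto simp: in_set_conv_nth)
      have vc: "v \<in> carrier_vec n" using v C by auto
      have f: "(\<lambda>u. a u \<cdot>\<^sub>v u) \<in> set vs \<rightarrow> carrier_vec n" using C by auto
      have "0 = lincomb a (set vs) \<bullet> conjugate v" using lc vc by simp
      also have "\<dots> = (\<Sum>u\<in>set vs. (a u \<cdot>\<^sub>v u) \<bullet> conjugate v)"
        unfolding lincomb_def using finsum_scalar_prod_sum[OF f, of "conjugate v"] vc by simp
      also have "\<dots> = (\<Sum>u\<in>set vs. a u * ip u v)"
      proof (rule sum.cong[OF refl])
        fix u assume "u \<in> set vs"
        then have uc: "u \<in> carrier_vec n" using C by auto
        show "(a u \<cdot>\<^sub>v u) \<bullet> conjugate v = a u * ip u v"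
          using ip_scalar[OF uc vc] uc vc by simp
      qed
      also have "\<dots> = a v * ip v v"
      proof (rule sum.remove[OF finite_set v, THEN trans])
        have "(\<Sum>u\<in>set vs - {v}. a u * ip u v) = 0"
        proof (rule sum.neutral, rule ballI)
          fix u assume u: "u \<in> set vs - {v}"
          then obtain i where i: "i < length vs" and ui: "u = vs!i" by (auto simp: in_set_conv_nth)
          have "i \<noteq> j" using u ui vj by auto
          then show "a u * ip u v = 0" using on i j ui vj unfolding onl_def by auto
        qed
        then show "a v * ip v v + (\<Sum>u\<in>set vs - {v}. a u * ip u v) = a v * ip v v" by simp
      qed
      also have "ip v v = 1" using on j vj unfolding onl_def by auto
      finally show "a v = 0" by simp
    qed
  qed (use C in auto)
qed

lemma onl_length: assumes on: "onl n vs" shows "length vs \<le> n"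
proof -
  interpret vec_space "TYPE(complex)" n .
  have C: "set vs \<subseteq> carrier_vec n" using on unfolding onl_def by auto
  have "card (set vs) \<le> dim" using li_le_dim(2)[OF fin_dim _ onl_indep[OF on]] C by auto
  then show ?thesis using distinct_card[OF onl_distinct[OF on]] dim_is_n by simp
qed


lemma onl_snoc: assumes on: "onl n us" and w: "w \<in> carrier_vec n" and ww: "ip w w = 1"
  and perp: "\<And>i. i < length us \<Longrightarrow> ip w (us!i) = 0"
  shows "onl n (us @ [w])"
proof -
  have C: "set us \<subseteq> carrier_vec n" using on unfolding onl_def by auto
  have perp': "ip (us!i) w = 0" if i: "i < length us" for i
  proof -
    have "us!i \<in> carrier_vec n" using C i by auto
    then have "ip (us!i) w = cnj (ip w (us!i))" using ip_cnj[of "us!i" w] w by simp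
    then show ?thesis using perp[OF i] by simp
  qed
  show ?thesis unfolding onl_def
  proof (intro conjI allI impI)
    show "set (us @ [w]) \<subseteq> carrier_vec n" using C w by auto
  next
    fix i j assume i: "i < length (us @ [w])" and j: "j < length (us @ [w])"
    show "ip ((us @ [w]) ! i) ((us @ [w]) ! j) = (if i = j then 1 else 0)"
    proof (cases "i < length us"; cases "j < length us")
      assume "i < length us" "j < length us" then show ?thesis using on unfolding onl_def by (simp add: nth_append)
    next
      assume a: "i < length us" "\<not> j < length us"
      then have "j = length us" using j by simp
      then show ?thesis using a perp' by (simp add: nth_append)
    next
      assume a: "\<not> i < length us" "j < length us"
      then have "i = length us" using i by simp
      then show ?thesis using a perp by (simp add: nth_append)
    next
      assume a: "\<not> i < length us" "\<not> j < length us"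
      then have "i = length us" "j = length us" using i j by auto
      then show ?thesis using ww by (simp add: nth_append)
    qed
  qed
qed

lemma onl_extend:
  assumes S: "S \<subseteq> carrier_vec n"
    and cl: "\<And>T. finite T \<Longrightarrow> T \<subseteq> S \<Longrightarrow> cspan n T \<subseteq> S"
    and on: "onl n us" and us: "set us \<subseteq> S"
  shows "\<exists>ws. onl n (us @ ws) \<and> set ws \<subseteq> S \<and> S \<subseteq> cspan n (set (us @ ws))"
  using on us
proof (induction "n - length us" arbitrary: us rule: less_induct)
  case less
  interpret cof_vec_space n "TYPE(complex)" .
  show ?case
  proof (cases "S \<subseteq> span (set us)")
    case True
    then show ?thesis using less.prems by (intro exI[of _ "[]"]) auto
  next
    case False
    then obtain v where vS: "v \<in> S" and vsp: "v \<notin> span (set us)" by auto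
    have vc: "v \<in> carrier_vec n" using vS S by auto
    have U: "set us \<subseteq> carrier_vec n" using less.prems unfolding onl_def by auto
    have dist: "distinct us" using onl_distinct[OF less.prems(1)] .
    have corth: "corthogonal us" using onl_corthogonal[OF less.prems(1)] .
    define w where "w = adjuster n v us + v"
    have wc: "w \<in> carrier_vec n" unfolding w_def using vc U dist by simp
    have w0: "w \<noteq> 0\<^sub>v n" unfolding w_def by (rule adjust_nonzero[OF U dist vc vsp])
    have wsp: "w \<in> span (insert v (set us))" unfolding w_def by (rule adjust_in_span[OF vc U dist])
    have IS: "insert v (set us) \<subseteq> S" using vS less.prems by auto
    have ISc: "insert v (set us) \<subseteq> carrier_vec n" using IS S by auto
    have wperp: "ip w (us!i) = 0" if i: "i < length us" for i
    proof -
      have "us!i \<in> carrier_vec n" using U i by auto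
      then show ?thesis using adjust_zero[OF U corth vc i] ip_scalar[OF wc] unfolding w_def by simp
    qed
    have nw: "vnorm w > 0" using vnorm_zero_iff[OF wc] vnorm_nonneg[of w] w0 by auto
    define w' where "w' = complex_of_real (1 / vnorm w) \<cdot>\<^sub>v w"
    have w'c: "w' \<in> carrier_vec n" unfolding w'_def using wc by simp
    have w'sp: "w' \<in> span (insert v (set us))" unfolding w'_def by (rule smult_in_span[OF ISc wsp])
    have w'S: "w' \<in> S" using cl[of "insert v (set us)"] IS w'sp by auto
    have w'w': "ip w' w' = 1"
    proof -
      have "ip w' w' = complex_of_real (1 / vnorm w) * complex_of_real (1 / vnorm w) * ip w w"
        unfolding w'_def using wc by (simp add: ip_smult_left ip_smult_right)
      also have "ip w w = complex_of_real (vnorm w ^ 2)" using vnorm_ip[of w] by simp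
      finally show ?thesis using nw by (simp add: power2_eq_square)
    qed
    have w'perp: "ip w' (us!i) = 0" if i: "i < length us" for i
      unfolding w'_def using wperp[OF i] by (simp add: ip_smult_left)
    have on': "onl n (us @ [w'])" by (rule onl_snoc[OF less.prems(1) w'c w'w' w'perp])
    have len: "length (us @ [w']) \<le> n" using onl_length[OF on'] .
    have "n - length (us @ [w']) < n - length us" using len by simp
    from less.hyps[OF this on'] less.prems(2) w'S obtain ws where
      ws: "onl n ((us @ [w']) @ ws)" "set ws \<subseteq> S" "S \<subseteq> span (set ((us @ [w']) @ ws))"
      by auto
    show ?thesis using ws w'S by (intro exI[of _ "w' # ws"]) auto
  qed
qed


lemma onl_complete: assumes on: "onl n us" shows "\<exists>ws. onl n (us @ ws) \<and> length (us @ ws) = n"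
proof -
  interpret vec_space "TYPE(complex)" n .
  have U: "set us \<subseteq> carrier_vec n" using on unfolding onl_def by auto
  obtain ws where ws: "onl n (us @ ws)" "carrier_vec n \<subseteq> span (set (us @ ws))"
    using onl_extend[of "carrier_vec n" n us] on U span_is_subset2 by auto
  have C: "set (us @ ws) \<subseteq> carrier_vec n" using ws(1) unfolding onl_def by auto
  have "span (set (us @ ws)) = carrier_vec n" using ws(2) span_is_subset2[OF C] by auto
  then have "basis (set (us @ ws))" unfolding basis_def using onl_indep[OF ws(1)] C by auto
  then have "dim = card (set (us @ ws))" by (intro dim_basis) auto
  then show ?thesis using ws(1) distinct_card[OF onl_distinct[OF ws(1)]] dim_is_n by auto
qed

lemma onl_subspace_basis:
  assumes S: "S \<subseteq> carrier_vec n"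
    and cl: "\<And>T. finite T \<Longrightarrow> T \<subseteq> S \<Longrightarrow> cspan n T \<subseteq> S"
  shows "\<exists>qs. onl n qs \<and> set qs \<subseteq> S \<and> S \<subseteq> cspan n (set qs)"
  using onl_extend[OF S cl, of "[]"] by (auto simp: onl_def)

lemma cdim_onl: assumes on: "onl n qs" and qS: "set qs \<subseteq> S" and S: "S \<subseteq> carrier_vec n"
  and Ssp: "S \<subseteq> cspan n (set qs)"
  shows "cdim n S = length qs"
proof -
  interpret vec_space "TYPE(complex)" n .
  have C: "set qs \<subseteq> carrier_vec n" using on unfolding onl_def by auto
  have "span S \<subseteq> span (span (set qs))" using span_is_monotone[OF Ssp] .
  also have "\<dots> = span (set qs)" using span_span[OF C] .
  finally have "span S = span (set qs)" using span_is_monotone[OF qS] by auto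
  then have "cdim n S = vectorspace.dim class_ring (span_vs (set qs))" unfolding cdim_def by simp
  also have "\<dots> = card (set qs)"
  proof (rule dim_span[OF C])
    show "maximal (set qs) (\<lambda>T. T \<subseteq> set qs \<and> \<not> lin_dep T)"
      unfolding maximal_def using onl_indep[OF on] by auto
  qed simp
  also have "\<dots> = length qs" using distinct_card[OF onl_distinct[OF on]] .
  finally show ?thesis .
qed


lemma onl_spanning_length: assumes on: "onl n qs" and sp: "carrier_vec n \<subseteq> cspan n (set qs)"
  shows "length qs = n"
proof -
  interpret vec_space "TYPE(complex)" n .
  have C: "set qs \<subseteq> carrier_vec n" using on unfolding onl_def by auto
  have "span (set qs) = carrier_vec n" using sp span_is_subset2[OF C] by auto
  then have "basis (set qs)" unfolding basis_def using onl_indep[OF on] C by auto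
  then have "dim = card (set qs)" by (intro dim_basis) auto
  then show ?thesis using distinct_card[OF onl_distinct[OF on]] dim_is_n by auto
qed

lemma eig_span_closed:
  assumes B: "B \<in> carrier_mat n n" and T: "T \<subseteq> {x \<in> carrier_vec n. B *\<^sub>v x = \<mu> \<cdot>\<^sub>v x}"
  shows "cspan n T \<subseteq> {x \<in> carrier_vec n. B *\<^sub>v x = \<mu> \<cdot>\<^sub>v x}"
proof -
  interpret vec_space "TYPE(complex)" n .
  have sub: "LinearCombinations.submodule class_ring {x \<in> carrier_vec n. B *\<^sub>v x = \<mu> \<cdot>\<^sub>v x} V"
  proof (rule LinearCombinations.submodule.intro)
    show "Module.module class_ring V" by unfold_locales
  next
    show "{x \<in> carrier_vec n. B *\<^sub>v x = \<mu> \<cdot>\<^sub>v x} \<subseteq> carrier V" by auto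
  next
    fix v w assume v: "v \<in> {x \<in> carrier_vec n. B *\<^sub>v x = \<mu> \<cdot>\<^sub>v x}" and w: "w \<in> {x \<in> carrier_vec n. B *\<^sub>v x = \<mu> \<cdot>\<^sub>v x}"
    then show "v \<oplus>\<^bsub>V\<^esub> w \<in> {x \<in> carrier_vec n. B *\<^sub>v x = \<mu> \<cdot>\<^sub>v x}"
      using B by (auto simp: mult_add_distrib_mat_vec[OF B] smult_add_distrib_vec[of _ n])
  next
    show "\<zero>\<^bsub>V\<^esub> \<in> {x \<in> carrier_vec n. B *\<^sub>v x = \<mu> \<cdot>\<^sub>v x}" using B by auto
  next
    fix a :: complex and v assume v: "v \<in> {x \<in> carrier_vec n. B *\<^sub>v x = \<mu> \<cdot>\<^sub>v x}"
    then show "a \<odot>\<^bsub>V\<^esub> v \<in> {x \<in> carrier_vec n. B *\<^sub>v x = \<mu> \<cdot>\<^sub>v x}"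
      using B by (auto simp: mult_mat_vec[OF B] smult_smult_assoc mult.commute)
  qed
  show ?thesis by (rule span_is_subset[OF T sub])
qed


lemma adj_adj: fixes A :: "complex mat" assumes A: "A \<in> carrier_mat n n" shows "mat_adjoint (mat_adjoint A) = A"
proof (rule eq_matI)
  fix i j assume "i < dim_row A" "j < dim_col A"
  then have i: "i < n" and j: "j < n" using A by auto
  show "mat_adjoint (mat_adjoint A) $$ (i, j) = A $$ (i, j)"
    using adj_index[OF adj_carrier[OF A] i j] adj_index[OF A j i] by simp
qed (use adj_carrier[OF adj_carrier[OF A]] A in auto)

lemma adj_mult_entry: assumes U: "U \<in> carrier_mat n n" and M: "M \<in> carrier_mat n n"
  and i: "i < n" and j: "j < n"
  shows "(mat_adjoint U * M) $$ (i,j) = ip (col M j) (col U i)"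
proof -
  have "(mat_adjoint U * M) $$ (i,j) = (\<Sum>k<n. mat_adjoint U $$ (i,k) * M $$ (k,j))"
    using U M i j adj_carrier[OF U] by (simp add: scalar_prod_def atLeast0LessThan)
  also have "\<dots> = (\<Sum>k<n. col M j $ k * cnj (col U i $ k))"
    using U M i j by (auto simp: adj_index intro!: sum.cong)
  finally show ?thesis unfolding ip_def using M by simp
qed

lemma onl_unitary: assumes on: "onl n L" and len: "length L = n"
  shows "unitary_mat n (mat_of_cols n L)" "unitary_mat n (mat_adjoint (mat_of_cols n L))"
proof -
  define Q where "Q = mat_of_cols n L"
  have Q: "Q \<in> carrier_mat n n" unfolding Q_def using len by auto
  have C: "set L \<subseteq> carrier_vec n" using on unfolding onl_def by auto
  have colQ: "col Q j = L ! j" if "j < n" for j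
    unfolding Q_def using that len C by (intro col_mat_of_cols) auto
  have QQ: "mat_adjoint Q * Q = 1\<^sub>m n"
  proof (rule eq_matI)
    fix i j assume i: "i < dim_row (1\<^sub>m n)" and j: "j < dim_col (1\<^sub>m n)"
    then have i': "i < n" and j': "j < n" by auto
    have "(mat_adjoint Q * Q) $$ (i,j) = ip (L!j) (L!i)"
      using adj_mult_entry[OF Q Q i' j'] colQ i' j' by simp
    also have "\<dots> = (if j = i then 1 else 0)" using on i' j' len unfolding onl_def by auto
    finally show "(mat_adjoint Q * Q) $$ (i,j) = 1\<^sub>m n $$ (i,j)" using i' j' by auto
  qed (use Q adj_carrier[OF Q] in auto)
  have QQ': "Q * mat_adjoint Q = 1\<^sub>m n"
    by (rule mat_mult_left_right_inverse[OF adj_carrier[OF Q] Q QQ])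
  show "unitary_mat n (mat_of_cols n L)" unfolding Q_def[symmetric] unitary_mat_def
    using Q QQ QQ' by auto
  show "unitary_mat n (mat_adjoint (mat_of_cols n L))" unfolding Q_def[symmetric] unitary_mat_def
    using adj_carrier[OF Q] QQ QQ' adj_adj[OF Q] by auto
qed


section \<open>Analytic part\<close>

lemma entry_holo: assumes "mat_analytic_on n F \<Omega>" "i < n" "j < n"
  shows "(\<lambda>z. F z $$ (i,j)) holomorphic_on \<Omega>"
  using assms unfolding mat_analytic_on_def by (auto intro: analytic_imp_holomorphic)

lemma ip_holo: assumes F: "mat_analytic_on n F \<Omega>" and x: "x \<in> carrier_vec n" and y: "y \<in> carrier_vec n"
  shows "(\<lambda>z. ip (F z *\<^sub>v x) y) holomorphic_on \<Omega>"
proof (rule holomorphic_transform)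
  show "(\<lambda>z. \<Sum>i<n. (\<Sum>j<n. F z $$ (i,j) * x $ j) * cnj (y $ i)) holomorphic_on \<Omega>"
    using entry_holo[OF F] by (intro holomorphic_on_sum holomorphic_intros) auto
next
  fix z assume z: "z \<in> \<Omega>"
  then have Fz: "F z \<in> carrier_mat n n" using F unfolding mat_analytic_on_def by auto
  show "(\<Sum>i<n. (\<Sum>j<n. F z $$ (i,j) * x $ j) * cnj (y $ i)) = ip (F z *\<^sub>v x) y"
    unfolding ip_def using Fz x by (auto simp: mat_vec_index[OF Fz x] simp del: index_mult_mat_vec)
qed

lemma max_const:
  assumes op: "open \<Omega>" and co: "connected \<Omega>" and F: "mat_analytic_on n F \<Omega>" and z0: "z0 \<in> \<Omega>"
    and bound: "\<And>z y. z \<in> \<Omega> \<Longrightarrow> y \<in> carrier_vec n \<Longrightarrow> vnorm (F z *\<^sub>v y) \<le> c * vnorm y"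
    and c: "c \<ge> 0" and x: "x \<in> carrier_vec n" and eq: "vnorm (F z0 *\<^sub>v x) = c * vnorm x"
    and z: "z \<in> \<Omega>"
  shows "F z *\<^sub>v x = F z0 *\<^sub>v x"
proof -
  have Fc: "\<And>z. z \<in> \<Omega> \<Longrightarrow> F z \<in> carrier_mat n n" using F unfolding mat_analytic_on_def by auto
  define a where "a = F z0 *\<^sub>v x"
  have a: "a \<in> carrier_vec n" unfolding a_def using Fc[OF z0] x by simp
  define \<phi> where "\<phi> = (\<lambda>z. ip (F z *\<^sub>v x) a)"
  have holo: "\<phi> holomorphic_on \<Omega>" unfolding \<phi>_def by (rule ip_holo[OF F x a])
  have \<phi>0: "\<phi> z0 = complex_of_real ((c * vnorm x)^2)"
    unfolding \<phi>_def a_def[symmetric] using vnorm_ip[of a] eq unfolding a_def by simp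
  have le: "cmod (\<phi> w) \<le> cmod (\<phi> z0)" if w: "w \<in> \<Omega>" for w
  proof -
    have "cmod (\<phi> w) \<le> vnorm (F w *\<^sub>v x) * vnorm a"
      unfolding \<phi>_def using ip_CS[of a "F w *\<^sub>v x"] Fc[OF w] a by simp
    also have "\<dots> \<le> (c * vnorm x) * (c * vnorm x)"
      using bound[OF w x] eq vnorm_nonneg[of a] vnorm_nonneg[of x] c unfolding a_def
      by (simp add: mult_right_mono)
    also have "\<dots> = cmod (\<phi> z0)" unfolding \<phi>0 norm_of_real abs_power2 by (simp add: power2_eq_square)
    finally show ?thesis .
  qed
  have "\<phi> constant_on \<Omega>"
    by (rule maximum_modulus_principle[OF holo op co op subset_refl z0 le])
  then have \<phi>z: "\<phi> z = \<phi> z0" unfolding constant_on_def using z z0 by metis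
  define u where "u = F z *\<^sub>v x"
  have u: "u \<in> carrier_vec n" unfolding u_def using Fc[OF z] x by simp
  have "Re (ip (u + complex_of_real (-1) \<cdot>\<^sub>v a) (u + complex_of_real (-1) \<cdot>\<^sub>v a))
      = Re (ip u u) + 2 * (-1) * Re (ip u a) + (-1)^2 * Re (ip a a)"
    by (rule ip_expand[OF u a])
  also have "Re (ip u a) = (c * vnorm x)^2" using \<phi>z \<phi>0 unfolding \<phi>_def u_def by simp
  also have "Re (ip a a) = (c * vnorm x)^2" using eq vnorm_sq[of a] unfolding a_def by simp
  also have "Re (ip u u) \<le> (c * vnorm x)^2"
    using power_mono[OF bound[OF z x] vnorm_nonneg[of "F z *\<^sub>v x"], of 2] vnorm_sq[of u] unfolding u_def by simp
  finally have "Re (ip (u + complex_of_real (-1) \<cdot>\<^sub>v a) (u + complex_of_real (-1) \<cdot>\<^sub>v a)) \<le> 0"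
    by simp
  then have "vnorm (u + complex_of_real (-1) \<cdot>\<^sub>v a) ^ 2 \<le> 0" by (simp add: vnorm_sq)
  then have "vnorm (u + complex_of_real (-1) \<cdot>\<^sub>v a) = 0" using vnorm_nonneg
    by (metis order_antisym zero_le_power2 power_eq_0_iff zero_neq_numeral)
  then have z0v: "u + complex_of_real (-1) \<cdot>\<^sub>v a = 0\<^sub>v n" using vnorm_zero_iff[of _ n] u a by simp
  show ?thesis
  proof (rule eq_vecI)
    fix i assume "i < dim_vec (F z0 *\<^sub>v x)"
    then have i: "i < n" using Fc[OF z0] by simp
    have "(u + complex_of_real (-1) \<cdot>\<^sub>v a) $ i = 0" using z0v i by simp
    moreover have "(u + complex_of_real (-1) \<cdot>\<^sub>v a) $ i = u $ i - a $ i" using i u a by simp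
    ultimately show "(F z *\<^sub>v x) $ i = (F z0 *\<^sub>v x) $ i" unfolding u_def a_def by simp
  qed (use Fc[OF z] Fc[OF z0] in simp)
qed


lemma higher_deriv_sum:
  assumes "finite J" and "\<And>j. j \<in> J \<Longrightarrow> f j holomorphic_on S" and "open S" and "z \<in> S"
  shows "(deriv ^^ k) (\<lambda>w. \<Sum>j\<in>J. f j w) z = (\<Sum>j\<in>J. (deriv ^^ k) (f j) z)"
  using assms(1,2)
proof (induction J rule: finite_induct)
  case empty
  then show ?case by (simp add: higher_deriv_const)
next
  case (insert a J)
  have "(deriv ^^ k) (\<lambda>w. \<Sum>j\<in>insert a J. f j w) z = (deriv ^^ k) (\<lambda>w. f a w + (\<Sum>j\<in>J. f j w)) z"
    using insert.hyps by simp
  also have "\<dots> = (deriv ^^ k) (f a) z + (deriv ^^ k) (\<lambda>w. \<Sum>j\<in>J. f j w) z"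
    using insert.prems assms(3,4) by (intro higher_deriv_add holomorphic_on_sum) auto
  also have "(deriv ^^ k) (\<lambda>w. \<Sum>j\<in>J. f j w) z = (\<Sum>j\<in>J. (deriv ^^ k) (f j) z)"
    using insert by auto
  finally show ?case using insert.hyps by simp
qed

lemma deriv_zero:
  assumes op: "open \<Omega>" and F: "mat_analytic_on n F \<Omega>" and z0: "z0 \<in> \<Omega>"
    and x: "x \<in> carrier_vec n" and const: "\<And>z. z \<in> \<Omega> \<Longrightarrow> F z *\<^sub>v x = F z0 *\<^sub>v x" and k: "k \<ge> 1"
  shows "mat_deriv n k F z0 *\<^sub>v x = 0\<^sub>v n"
proof -
  have Fc: "\<And>z. z \<in> \<Omega> \<Longrightarrow> F z \<in> carrier_mat n n" using F unfolding mat_analytic_on_def by auto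
  have D: "mat_deriv n k F z0 \<in> carrier_mat n n" unfolding mat_deriv_def by simp
  show ?thesis
  proof (rule eq_vecI)
    fix i assume "i < dim_vec (0\<^sub>v n :: complex Matrix.vec)"
    then have i: "i < n" by simp
    have "(mat_deriv n k F z0 *\<^sub>v x) $ i = (\<Sum>j<n. (deriv ^^ k) (\<lambda>w. F w $$ (i,j)) z0 * x $ j)"
      using mat_vec_index[OF D x i] i unfolding mat_deriv_def by simp
    also have "\<dots> = (\<Sum>j<n. (deriv ^^ k) (\<lambda>w. x $ j * F w $$ (i,j)) z0)"
    proof (intro sum.cong refl)
      fix j assume "j \<in> {..<n}"
      then have j: "j < n" by simp
      show "(deriv ^^ k) (\<lambda>w. F w $$ (i,j)) z0 * x $ j = (deriv ^^ k) (\<lambda>w. x $ j * F w $$ (i,j)) z0"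
        using higher_deriv_cmult[OF entry_holo[OF F i j] z0 op, of k "x $ j"] by (simp add: mult.commute)
    qed
    also have "\<dots> = (deriv ^^ k) (\<lambda>w. \<Sum>j<n. x $ j * F w $$ (i,j)) z0"
      using entry_holo[OF F i] op z0 by (intro higher_deriv_sum[symmetric] holomorphic_intros) auto
    also have "\<dots> = (deriv ^^ k) (\<lambda>w. (F z0 *\<^sub>v x) $ i) z0"
    proof (rule higher_deriv_cong_ev)
      have "\<forall>\<^sub>F w in nhds z0. w \<in> \<Omega>" using op z0 by (rule eventually_nhds_in_open)
      then show "\<forall>\<^sub>F w in nhds z0. (\<Sum>j<n. x $ j * F w $$ (i,j)) = (F z0 *\<^sub>v x) $ i"
      proof (rule eventually_mono)
        fix w assume w: "w \<in> \<Omega>"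
        have "(\<Sum>j<n. x $ j * F w $$ (i,j)) = (F w *\<^sub>v x) $ i"
          using mat_vec_index[OF Fc[OF w] x i] by (simp add: mult.commute)
        then show "(\<Sum>j<n. x $ j * F w $$ (i,j)) = (F z0 *\<^sub>v x) $ i" using const[OF w] by simp
      qed
    qed simp
    also have "\<dots> = 0" using k by (simp add: higher_deriv_const)
    finally show "(mat_deriv n k F z0 *\<^sub>v x) $ i = 0\<^sub>v n $ i" using i by simp
  qed (use D in simp)
qed


section \<open>Block decomposition\<close>

lemma ip_real_right: "dim_vec y = dim_vec x \<Longrightarrow> ip x (complex_of_real r \<cdot>\<^sub>v y) = complex_of_real r * ip x y"
  by (simp add: ip_smult_right)

lemma block_entries:
  fixes Fz A :: "complex mat" and c :: real
  assumes Fz: "Fz \<in> carrier_mat n n" and A: "A \<in> carrier_mat n n" and c: "c > 0"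
    and onQ: "onl n (qs @ rs)" and lenQ: "length (qs @ rs) = n"
    and onU: "onl n (ws @ ts)" and lenU: "length (ws @ ts) = n"
    and ws: "ws = map (\<lambda>q. complex_of_real (1/c) \<cdot>\<^sub>v (A *\<^sub>v q)) qs"
    and same: "\<And>q. q \<in> set qs \<Longrightarrow> Fz *\<^sub>v q = A *\<^sub>v q"
    and eigA: "\<And>q. q \<in> set qs \<Longrightarrow> mat_adjoint A *\<^sub>v (A *\<^sub>v q) = complex_of_real (c^2) \<cdot>\<^sub>v q"
    and eigF: "\<And>q. q \<in> set qs \<Longrightarrow> mat_adjoint Fz *\<^sub>v (Fz *\<^sub>v q) = complex_of_real (c^2) \<cdot>\<^sub>v q"
    and d: "d = length qs"
  shows "mat_adjoint (mat_of_cols n (ws @ ts)) * Fz * mat_of_cols n (qs @ rs)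
    = four_block_mat (complex_of_real c \<cdot>\<^sub>m 1\<^sub>m d) (0\<^sub>m d (n - d)) (0\<^sub>m (n - d) d)
        (Matrix.mat (n - d) (n - d) (\<lambda>(i,j). ip (Fz *\<^sub>v (rs!j)) (ts!i)))"
    (is "?L = ?B")
proof -
  define Q where "Q = mat_of_cols n (qs @ rs)"
  define U where "U = mat_of_cols n (ws @ ts)"
  have Q: "Q \<in> carrier_mat n n" unfolding Q_def using lenQ by auto
  have U: "U \<in> carrier_mat n n" unfolding U_def using lenU by auto
  have CQ: "set (qs @ rs) \<subseteq> carrier_vec n" using onQ unfolding onl_def by auto
  have CU: "set (ws @ ts) \<subseteq> carrier_vec n" using onU unfolding onl_def by auto
  have colQ: "col Q j = (qs @ rs) ! j" if "j < n" for j
    unfolding Q_def using that lenQ CQ nth_mem[of j "qs @ rs"] by (intro col_mat_of_cols) auto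
  have colU: "col U j = (ws @ ts) ! j" if "j < n" for j
    unfolding U_def using that lenU CU nth_mem[of j "ws @ ts"] by (intro col_mat_of_cols) auto
  have lenws: "length ws = d" using ws d by simp
  have dn: "d \<le> n" using lenQ d by simp
  have qc: "qs ! i \<in> carrier_vec n" if "i < d" for i using CQ that d by (auto simp: nth_append)
  have wsi: "(ws @ ts) ! i = complex_of_real (1/c) \<cdot>\<^sub>v (A *\<^sub>v qs ! i)" if "i < d" for i
    using that ws d by (simp add: nth_append)
  have qsi: "(qs @ rs) ! i = qs ! i" if "i < d" for i using that d by (simp add: nth_append)
  have ipQ: "ip ((qs @ rs) ! i) ((qs @ rs) ! j) = (if i = j then 1 else 0)" if "i < n" "j < n" for i j
    using onQ that lenQ unfolding onl_def by auto
  have ipU: "ip ((ws @ ts) ! i) ((ws @ ts) ! j) = (if i = j then 1 else 0)" if "i < n" "j < n" for i j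
    using onU that lenU unfolding onl_def by auto
  have B: "?B \<in> carrier_mat n n" using four_block_carrier_mat[of "complex_of_real c \<cdot>\<^sub>m 1\<^sub>m d" d d
      "Matrix.mat (n - d) (n - d) (\<lambda>(i,j). ip (Fz *\<^sub>v (rs!j)) (ts!i))" "n - d" "n - d"] dn by simp
  have "?L = mat_adjoint U * (Fz * Q)" unfolding U_def[symmetric] Q_def[symmetric]
    using adj_carrier[OF U] Fz Q by simp
  also have "\<dots> = ?B"
  proof (rule eq_matI)
    fix i j assume "i < dim_row ?B" "j < dim_col ?B"
    then have i: "i < n" and j: "j < n" using B by auto
    have cFQ: "col (Fz * Q) j = Fz *\<^sub>v ((qs @ rs) ! j)"
      by (simp only: col_mult2[OF Fz Q j] colQ[OF j])
    have "(mat_adjoint U * (Fz * Q)) $$ (i,j) = ip (col (Fz * Q) j) (col U i)"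
      by (rule adj_mult_entry[OF U _ i j]) (use Fz Q in simp)
    then have "(mat_adjoint U * (Fz * Q)) $$ (i,j) = ip (Fz *\<^sub>v ((qs @ rs) ! j)) ((ws @ ts) ! i)"
      by (simp only: cFQ colU[OF i])
    also have "\<dots> = ?B $$ (i,j)"
    proof (cases "i < d"; cases "j < d")
      assume id: "i < d" and jd: "j < d"
      have "ip (Fz *\<^sub>v ((qs @ rs) ! j)) ((ws @ ts) ! i)
          = complex_of_real (1/c) * ip (A *\<^sub>v qs ! j) (A *\<^sub>v qs ! i)"
        using wsi[OF id] qsi[OF jd] same[of "qs ! j"] jd d A qc[OF id] by (simp add: ip_smult_right)
      also have "ip (A *\<^sub>v qs ! j) (A *\<^sub>v qs ! i) = ip (qs ! j) (complex_of_real (c^2) \<cdot>\<^sub>v qs ! i)"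
        using ip_adj[OF A qc[OF jd], of "A *\<^sub>v qs ! i"] eigA[of "qs ! i"] A qc[OF id] id d by simp
      also have "\<dots> = complex_of_real (c^2) * (if j = i then 1 else 0)"
        using ipQ[of j i] qsi[OF id] qsi[OF jd] i j qc[OF id] qc[OF jd] by (simp add: ip_smult_right)
      finally show ?thesis using id jd dn i j by (simp add: power2_eq_square)
    next
      assume id: "i < d" and jd: "\<not> j < d"
      have rj: "(qs @ rs) ! j \<in> carrier_vec n" using CQ nth_mem[of j "qs @ rs"] j lenQ by auto
      have "ip (Fz *\<^sub>v ((qs @ rs) ! j)) ((ws @ ts) ! i)
          = complex_of_real (1/c) * ip (Fz *\<^sub>v ((qs @ rs) ! j)) (Fz *\<^sub>v qs ! i)"
        using wsi[OF id] same[of "qs ! i"] id d Fz A qc[OF id] rj by (simp add: ip_smult_right)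
      also have "ip (Fz *\<^sub>v ((qs @ rs) ! j)) (Fz *\<^sub>v qs ! i) = ip ((qs @ rs) ! j) (complex_of_real (c^2) \<cdot>\<^sub>v qs ! i)"
        using ip_adj[OF Fz rj, of "Fz *\<^sub>v qs ! i"] eigF[of "qs ! i"] Fz qc[OF id] id d by simp
      also have "\<dots> = 0"
        using ipQ[of j i] qsi[OF id] i j id jd qc[OF id] rj by (simp add: ip_smult_right)
      finally show ?thesis using id jd dn i j by simp
    next
      assume id: "\<not> i < d" and jd: "j < d"
      have ti: "(ws @ ts) ! i \<in> carrier_vec n" using CU nth_mem[of i "ws @ ts"] i lenU by auto
      have wj: "(ws @ ts) ! j = complex_of_real (1/c) \<cdot>\<^sub>v (A *\<^sub>v qs ! j)" using wsi[OF jd] .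
      have "A *\<^sub>v qs ! j = complex_of_real c \<cdot>\<^sub>v ((ws @ ts) ! j)"
        unfolding wj using c by (simp add: smult_smult_assoc)
      then have "ip (Fz *\<^sub>v ((qs @ rs) ! j)) ((ws @ ts) ! i) = complex_of_real c * ip ((ws @ ts) ! j) ((ws @ ts) ! i)"
        using qsi[OF jd] same[of "qs ! j"] jd d by (simp add: ip_smult_left)
      also have "\<dots> = 0" using ipU[of j i] i j id jd by auto
      finally show ?thesis using id jd dn i j by simp
    next
      assume id: "\<not> i < d" and jd: "\<not> j < d"
      show ?thesis using id jd dn i j d lenws by (simp add: nth_append)
    qed
    finally show "(mat_adjoint U * (Fz * Q)) $$ (i,j) = ?B $$ (i,j)" .
  qed (use B adj_carrier[OF U] Fz Q in auto)
  finally show ?thesis .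
qed


lemma adj_one: "mat_adjoint (1\<^sub>m n :: complex mat) = 1\<^sub>m n"
proof (rule eq_matI)
  fix i j assume "i < dim_row (1\<^sub>m n :: complex mat)" "j < dim_col (1\<^sub>m n :: complex mat)"
  then have i: "i < n" and j: "j < n" by auto
  show "mat_adjoint (1\<^sub>m n :: complex mat) $$ (i,j) = 1\<^sub>m n $$ (i,j)"
    using adj_index[of "1\<^sub>m n" n i j] i j by auto
qed (use adj_carrier[of "1\<^sub>m n :: complex mat" n] in auto)

lemma unitary_one: "unitary_mat n (1\<^sub>m n)"
  unfolding unitary_mat_def adj_one by simp

lemma four_block_full:
  fixes X :: "complex mat"
  assumes X: "X \<in> carrier_mat n n" and D: "D \<in> carrier_mat 0 0"
  shows "four_block_mat X (0\<^sub>m n 0) (0\<^sub>m 0 n) D = X"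
  by (rule eq_matI) (use X D in auto)

theorem theorem8:
  fixes \<Omega> :: "complex set" and F :: "complex \<Rightarrow> complex mat" and n :: nat and z0 :: complex
  assumes "open \<Omega>" and "connected \<Omega>" and "\<Omega> \<noteq> {}"
    and "mat_analytic_on n F \<Omega>"
    and "z0 \<in> \<Omega>"
    and "\<forall>z\<in>\<Omega>. opnorm (F z) \<le> opnorm (F z0)"
    and "d = cdim n {x \<in> carrier_vec n. vnorm (mult_mat_vec (F z0) x) = opnorm (F z0) * vnorm x}"
  shows "(\<exists>U V. unitary_mat n U \<and> unitary_mat n V \<and>
            (d = n \<longrightarrow> (\<forall>z\<in>\<Omega>. F z = opnorm (F z0) \<cdot>\<^sub>m (U * V))) \<and>
            (d < n \<longrightarrow> (\<exists>R. mat_analytic_on (n - d) R \<Omega> \<and>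
               (\<forall>z\<in>\<Omega>. F z = U * four_block_mat (complex_of_real (opnorm (F z0)) \<cdot>\<^sub>m 1\<^sub>m d) (0\<^sub>m d (n - d))
                                             (0\<^sub>m (n - d) d) (R z) * V))))
       \<and> (\<forall>x \<in> carrier_vec n. vnorm (mult_mat_vec (F z0) x) = opnorm (F z0) * vnorm x \<longrightarrow>
            (\<forall>z\<in>\<Omega>. mult_mat_vec (F z) x = mult_mat_vec (F z0) x) \<and>
            (\<forall>k\<ge>1. mult_mat_vec (mat_deriv n k F z0) x = 0\<^sub>v n))"
proof -
  note op = assms(1) and co = assms(2) and F = assms(4) and z0 = assms(5)
  define c where "c = opnorm (F z0)"
  define A where "A = F z0"
  have Fc: "\<And>z. z \<in> \<Omega> \<Longrightarrow> F z \<in> carrier_mat n n" using F unfolding mat_analytic_on_def by auto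
  have Ac: "A \<in> carrier_mat n n" unfolding A_def using Fc[OF z0] .
  have c0: "c \<ge> 0" unfolding c_def using opnorm_nonneg[OF Fc[OF z0]] .
  have bound: "vnorm (F z *\<^sub>v y) \<le> c * vnorm y" if z: "z \<in> \<Omega>" and y: "y \<in> carrier_vec n" for z y
  proof -
    have "vnorm (F z *\<^sub>v y) \<le> opnorm (F z) * vnorm y" by (rule opnorm_bound[OF Fc[OF z] y])
    also have "\<dots> \<le> c * vnorm y" unfolding c_def using assms(6) z vnorm_nonneg[of y]
      by (simp add: mult_right_mono)
    finally show ?thesis .
  qed
  define M where "M = {x \<in> carrier_vec n. vnorm (F z0 *\<^sub>v x) = opnorm (F z0) * vnorm x}"
  have dM: "d = cdim n M" unfolding M_def using assms(7) .
  have MC: "M \<subseteq> carrier_vec n" unfolding M_def by auto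
  have const: "F z *\<^sub>v x = A *\<^sub>v x" if x: "x \<in> M" and z: "z \<in> \<Omega>" for x z
    unfolding A_def
    by (rule max_const[OF op co F z0 bound c0 _ _ z]) (use x in \<open>auto simp: M_def c_def\<close>)
  have eigF: "mat_adjoint (F z) *\<^sub>v (F z *\<^sub>v x) = complex_of_real (c^2) \<cdot>\<^sub>v x" if x: "x \<in> M" and z: "z \<in> \<Omega>" for x z
  proof (rule max_vec_eig[OF Fc[OF z] c0])
    show "x \<in> carrier_vec n" using x MC by auto
    show "vnorm (F z *\<^sub>v y) \<le> c * vnorm y" if "y \<in> carrier_vec n" for y using bound[OF z that] .
    show "vnorm (F z *\<^sub>v x) = c * vnorm x" using const[OF x z] x unfolding M_def A_def c_def by simp
  qed
  have eigA: "mat_adjoint A *\<^sub>v (A *\<^sub>v x) = complex_of_real (c^2) \<cdot>\<^sub>v x" if x: "x \<in> M" for x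
    using eigF[OF x z0] unfolding A_def .
  define B where "B = mat_adjoint A * A"
  have Bc: "B \<in> carrier_mat n n" unfolding B_def using adj_carrier[OF Ac] Ac by simp
  have ME: "M = {x \<in> carrier_vec n. B *\<^sub>v x = complex_of_real (c^2) \<cdot>\<^sub>v x}"
  proof (intro equalityI subsetI)
    fix x assume x: "x \<in> M"
    then show "x \<in> {x \<in> carrier_vec n. B *\<^sub>v x = complex_of_real (c^2) \<cdot>\<^sub>v x}"
      using eigA[OF x] MC adj_carrier[OF Ac] Ac unfolding B_def by auto
  next
    fix x assume "x \<in> {x \<in> carrier_vec n. B *\<^sub>v x = complex_of_real (c^2) \<cdot>\<^sub>v x}"
    then have x: "x \<in> carrier_vec n" and Bx: "mat_adjoint A *\<^sub>v (A *\<^sub>v x) = complex_of_real (c^2) \<cdot>\<^sub>v x"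
      using adj_carrier[OF Ac] Ac unfolding B_def by auto
    have "vnorm (A *\<^sub>v x) ^ 2 = Re (ip x (mat_adjoint A *\<^sub>v (A *\<^sub>v x)))"
      unfolding vnorm_sq using ip_adj[OF Ac x, of "A *\<^sub>v x"] Ac x by simp
    also have "\<dots> = (c * vnorm x) ^ 2" unfolding Bx using x
      by (simp add: ip_smult_right vnorm_sq power_mult_distrib)
    finally have "vnorm (A *\<^sub>v x) = c * vnorm x"
      using vnorm_nonneg[of "A *\<^sub>v x"] vnorm_nonneg[of x] c0 by (simp add: power2_eq_iff_nonneg)
    then show "x \<in> M" unfolding M_def A_def c_def using x by simp
  qed
  have cl: "cspan n T \<subseteq> M" if "finite T" "T \<subseteq> M" for T
    using eig_span_closed[OF Bc, of T] that ME by auto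
  obtain qs where qs: "onl n qs" "set qs \<subseteq> M" "M \<subseteq> cspan n (set qs)"
    using onl_subspace_basis[OF MC cl] by blast
  have d: "d = length qs" unfolding dM by (rule cdim_onl[OF qs(1,2) MC qs(3)])
  have part2: "\<forall>x \<in> carrier_vec n. vnorm (mult_mat_vec (F z0) x) = opnorm (F z0) * vnorm x \<longrightarrow>
            (\<forall>z\<in>\<Omega>. mult_mat_vec (F z) x = mult_mat_vec (F z0) x) \<and>
            (\<forall>k\<ge>1. mult_mat_vec (mat_deriv n k F z0) x = 0\<^sub>v n)"
  proof (intro ballI impI)
    fix x assume x: "x \<in> carrier_vec n" and eq: "vnorm (F z0 *\<^sub>v x) = opnorm (F z0) * vnorm x"
    then have xM: "x \<in> M" unfolding M_def by simp
    have P1: "\<forall>z\<in>\<Omega>. F z *\<^sub>v x = F z0 *\<^sub>v x" using const[OF xM] unfolding A_def by simp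
    have P2: "\<forall>k\<ge>1. mat_deriv n k F z0 *\<^sub>v x = 0\<^sub>v n"
    proof (intro allI impI)
      fix k :: nat assume k: "k \<ge> 1"
      show "mat_deriv n k F z0 *\<^sub>v x = 0\<^sub>v n"
        by (rule deriv_zero[OF op F z0 x _ k]) (use const[OF xM] in \<open>simp add: A_def\<close>)
    qed
    show "(\<forall>z\<in>\<Omega>. F z *\<^sub>v x = F z0 *\<^sub>v x) \<and> (\<forall>k\<ge>1. mat_deriv n k F z0 *\<^sub>v x = 0\<^sub>v n)"
      using P1 P2 by blast
  qed
  have part1: "\<exists>U V. unitary_mat n U \<and> unitary_mat n V \<and>
            (d = n \<longrightarrow> (\<forall>z\<in>\<Omega>. F z = opnorm (F z0) \<cdot>\<^sub>m (U * V))) \<and>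
            (d < n \<longrightarrow> (\<exists>R. mat_analytic_on (n - d) R \<Omega> \<and>
               (\<forall>z\<in>\<Omega>. F z = U * four_block_mat (complex_of_real (opnorm (F z0)) \<cdot>\<^sub>m 1\<^sub>m d) (0\<^sub>m d (n - d))
                                             (0\<^sub>m (n - d) d) (R z) * V)))"
  proof (cases "c = 0")
    case True
    have Fz0: "F z *\<^sub>v y = 0\<^sub>v n" if z: "z \<in> \<Omega>" and y: "y \<in> carrier_vec n" for z y
    proof -
      have "vnorm (F z *\<^sub>v y) = 0" using bound[OF z y] vnorm_nonneg[of "F z *\<^sub>v y"] True by simp
      then show ?thesis using vnorm_zero_iff[of "F z *\<^sub>v y" n] Fc[OF z] y by simp
    qed
    have "carrier_vec n \<subseteq> M" unfolding M_def using Fz0[OF z0] True unfolding c_def by auto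
    then have "length qs = n" using onl_spanning_length[OF qs(1)] qs(3) by auto
    then have dn: "d = n" using d by simp
    have F0: "F z = 0\<^sub>m n n" if z: "z \<in> \<Omega>" for z
    proof (rule eq_matI)
      fix i j assume "i < dim_row (0\<^sub>m n n :: complex mat)" "j < dim_col (0\<^sub>m n n :: complex mat)"
      then have i: "i < n" and j: "j < n" by auto
      have "(F z *\<^sub>v unit_vec n j) $ i = (\<Sum>k<n. F z $$ (i,k) * unit_vec n j $ k)"
        by (rule mat_vec_index[OF Fc[OF z] _ i]) simp
      also have "\<dots> = F z $$ (i,j)" using j by (simp add: if_distrib cong: if_cong)
      finally show "F z $$ (i,j) = 0\<^sub>m n n $$ (i,j)" using Fz0[OF z, of "unit_vec n j"] i j by simp
    qed (use Fc[OF z] in auto)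
    have G1: "\<forall>z\<in>\<Omega>. F z = complex_of_real (opnorm (F z0)) \<cdot>\<^sub>m (1\<^sub>m n * 1\<^sub>m n)"
      using F0 True unfolding c_def by (auto intro!: eq_matI)
    show ?thesis using unitary_one[of n] G1 dn by blast
  next
    case False
    then have cpos: "c > 0" using c0 by simp
    obtain rs where rs: "onl n (qs @ rs)" "length (qs @ rs) = n" using onl_complete[OF qs(1)] by blast
    define ws where "ws = map (\<lambda>q. complex_of_real (1/c) \<cdot>\<^sub>v (A *\<^sub>v q)) qs"
    have qM: "qs ! i \<in> M" if "i < length qs" for i using qs(2) that by auto
    have qC: "qs ! i \<in> carrier_vec n" if "i < length qs" for i using qM[OF that] MC by auto
    have onws: "onl n ws" unfolding onl_def
    proof (intro conjI allI impI)
      show "set ws \<subseteq> carrier_vec n" unfolding ws_def using qs(2) MC Ac by auto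
    next
      fix i j assume i: "i < length ws" and j: "j < length ws"
      then have i': "i < length qs" and j': "j < length qs" unfolding ws_def by auto
      have "ip (ws ! i) (ws ! j) = complex_of_real (1/c) * complex_of_real (1/c) * ip (A *\<^sub>v qs ! i) (A *\<^sub>v qs ! j)"
        unfolding ws_def using i' j' Ac by (simp add: ip_smult_left ip_smult_right)
      also have "ip (A *\<^sub>v qs ! i) (A *\<^sub>v qs ! j) = complex_of_real (c^2) * ip (qs ! i) (qs ! j)"
        using ip_adj[OF Ac qC[OF i'], of "A *\<^sub>v qs ! j"] eigA[OF qM[OF j']] Ac qC[OF i'] qC[OF j']
        by (simp add: ip_smult_right)
      also have "ip (qs ! i) (qs ! j) = (if i = j then 1 else 0)" using qs(1) i' j' unfolding onl_def by auto
      finally show "ip (ws ! i) (ws ! j) = (if i = j then 1 else 0)" using cpos by (simp add: power2_eq_square)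
    qed
    obtain ts where ts: "onl n (ws @ ts)" "length (ws @ ts) = n" using onl_complete[OF onws] by blast
    define U where "U = mat_of_cols n (ws @ ts)"
    define Q where "Q = mat_of_cols n (qs @ rs)"
    define V where "V = mat_adjoint Q"
    define R where "R = (\<lambda>z. Matrix.mat (n - d) (n - d) (\<lambda>(i,j). ip (F z *\<^sub>v (rs!j)) (ts!i)))"
    have uU: "unitary_mat n U" unfolding U_def using onl_unitary[OF ts] by simp
    have uQ: "unitary_mat n Q" unfolding Q_def using onl_unitary[OF rs] by simp
    have uV: "unitary_mat n V" unfolding V_def Q_def using onl_unitary[OF rs] by simp
    have Uc: "U \<in> carrier_mat n n" using uU unfolding unitary_mat_def by simp
    have Qc: "Q \<in> carrier_mat n n" using uQ unfolding unitary_mat_def by simp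
    have dn: "d \<le> n" using d rs(2) by simp
    define Bl where "Bl = (\<lambda>z. four_block_mat (complex_of_real c \<cdot>\<^sub>m 1\<^sub>m d) (0\<^sub>m d (n - d)) (0\<^sub>m (n - d) d) (R z))"
    have Blc: "Bl z \<in> carrier_mat n n" for z
      using four_block_carrier_mat[of "complex_of_real c \<cdot>\<^sub>m 1\<^sub>m d" d d "R z" "n - d" "n - d"] dn
      unfolding Bl_def R_def by simp
    have decomp: "F z = U * Bl z * V" if z: "z \<in> \<Omega>" for z
    proof -
      have E: "mat_adjoint U * F z * Q = Bl z" unfolding U_def Q_def Bl_def R_def
        by (rule block_entries[OF Fc[OF z] Ac cpos rs ts ws_def _ _ _ d])
           (use const[OF _ z] eigA eigF[OF _ z] qs(2) in auto)
      have "U * Bl z * V = U * (mat_adjoint U * F z * Q) * mat_adjoint Q" unfolding E V_def ..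
      also have "\<dots> = (U * mat_adjoint U) * F z * (Q * mat_adjoint Q)"
        using Uc Qc adj_carrier[OF Uc] adj_carrier[OF Qc] Fc[OF z] by (simp add: assoc_mult_mat[of _ n n _ n _ n])
      also have "\<dots> = F z" using uU uQ Fc[OF z] unfolding unitary_mat_def by simp
      finally show ?thesis by simp
    qed
    have H1: "d = n \<longrightarrow> (\<forall>z\<in>\<Omega>. F z = complex_of_real (opnorm (F z0)) \<cdot>\<^sub>m (U * V))"
    proof
      assume dn': "d = n"
      show "\<forall>z\<in>\<Omega>. F z = complex_of_real (opnorm (F z0)) \<cdot>\<^sub>m (U * V)"
      proof
        fix z assume z: "z \<in> \<Omega>"
        have "Bl z = complex_of_real c \<cdot>\<^sub>m 1\<^sub>m n"
          unfolding Bl_def using dn' four_block_full[of "complex_of_real c \<cdot>\<^sub>m 1\<^sub>m n" n "R z"]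
          unfolding R_def by simp
        then have "F z = U * (complex_of_real c \<cdot>\<^sub>m 1\<^sub>m n) * V" using decomp[OF z] by simp
        also have "\<dots> = complex_of_real c \<cdot>\<^sub>m (U * V)"
        proof -
          have Vc: "V \<in> carrier_mat n n" using uV unfolding unitary_mat_def by simp
          have "U * (complex_of_real c \<cdot>\<^sub>m 1\<^sub>m n) = complex_of_real c \<cdot>\<^sub>m U"
            using mult_smult_distrib[OF Uc one_carrier_mat, of "complex_of_real c"] Uc by simp
          then show ?thesis using mult_smult_assoc_mat[OF Uc Vc] by simp
        qed
        finally show "F z = complex_of_real (opnorm (F z0)) \<cdot>\<^sub>m (U * V)" unfolding c_def .
      qed
    qed
    have H2: "d < n \<longrightarrow> (\<exists>R. mat_analytic_on (n - d) R \<Omega> \<and>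
        (\<forall>z\<in>\<Omega>. F z = U * four_block_mat (complex_of_real (opnorm (F z0)) \<cdot>\<^sub>m 1\<^sub>m d) (0\<^sub>m d (n - d))
                                             (0\<^sub>m (n - d) d) (R z) * V))"
    proof
      show "\<exists>R. mat_analytic_on (n - d) R \<Omega> \<and>
        (\<forall>z\<in>\<Omega>. F z = U * four_block_mat (complex_of_real (opnorm (F z0)) \<cdot>\<^sub>m 1\<^sub>m d) (0\<^sub>m d (n - d))
                                             (0\<^sub>m (n - d) d) (R z) * V)"
      proof (intro exI[of _ R] conjI)
        show "\<forall>z\<in>\<Omega>. F z = U * four_block_mat (complex_of_real (opnorm (F z0)) \<cdot>\<^sub>m 1\<^sub>m d) (0\<^sub>m d (n - d))
                                             (0\<^sub>m (n - d) d) (R z) * V"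
          using decomp unfolding Bl_def c_def by simp
        show "mat_analytic_on (n - d) R \<Omega>" unfolding mat_analytic_on_def
        proof (intro conjI ballI allI impI)
          fix z show "R z \<in> carrier_mat (n - d) (n - d)" unfolding R_def by simp
        next
          fix i j assume i: "i < n - d" and j: "j < n - d"
          have rj: "rs ! j \<in> carrier_vec n" using rs(1) j d rs(2) nth_mem[of j rs] unfolding onl_def by auto
          have ti: "ts ! i \<in> carrier_vec n" using ts(1) i d ts(2) nth_mem[of i ts] unfolding onl_def ws_def by auto
          have "(\<lambda>z. ip (F z *\<^sub>v (rs!j)) (ts!i)) holomorphic_on \<Omega>" by (rule ip_holo[OF F rj ti])
          then have "(\<lambda>z. R z $$ (i,j)) holomorphic_on \<Omega>" unfolding R_def using i j by simp
          then show "(\<lambda>z. R z $$ (i,j)) analytic_on \<Omega>" using analytic_on_open[OF op] by simp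
        qed
      qed
    qed
    show ?thesis using uU uV H1 H2 by blast
  qed
  show ?thesis using part1 part2 by blast
qed

end
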